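(* Let $n,m,N$ be positive integers, $\mathbf{x}=(x_1,\ldots,x_n)$, and let $p_1,\ldots,p_N,q_1,\ldots,q_N,g_1,\ldots,g_m\in\mathbb{R}[\mathbf{x}]$. Let $\mathbf{K}=\{\mathbf{x}\in\mathbb{R}^n\mid g_j(\mathbf{x})\ge 0,\ j=1,\ldots,m\}$ and assume that $\mathbf{K}$ is compact and $q_i>0$ on $\mathbf{K}$ for every $i\in[N]$. Let $\rho=\inf_{\mathbf{x}\in\mathbf{K}}\sum_{i=1}^N p_i(\mathbf{x})/q_i(\mathbf{x})$. Consider the problem \[ \sup_{c\in\mathbb{R},\,h_2,\ldots,h_N\in\mathbb{R}[\mathbf{x}]}\ c\quad\text{s.t.}\quad p_1(\mathbf{x})+\Big(\sum_{i=2}^N h_i(\mathbf{x})-c\Big)q_1(\mathbf{x})\ge 0\ \ \forall\mathbf{x}\in\mathbf{K},\qquad p_i(\mathbf{x})-h_i(\mathbf{x})q_i(\mathbf{x})\ge 0\ \ \forall\mathbf{x}\in\mathbf{K},\ i=2,\ldots,N. \] Then the optimal value of this problem equals $\rho$.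
   Context: $[N]=\{1,\ldots,N\}$. $\mathbb{R}[\mathbf{x}]$ is the ring of real polynomials in $\mathbf{x}$. *)

theory Defs
  imports "HOL-Analysis.Analysis"
begin

end

theory Submission
  imports Defs
begin

theorem theorem3p1:
  fixes p q :: "nat \<Rightarrow> (real^'n \<Rightarrow> real)"
    and g :: "nat \<Rightarrow> (real^'n \<Rightarrow> real)"
    and N m :: nat
  assumes "N \<ge> 1" and "m \<ge> 1"
    and "\<forall>i\<in>{1..N}. real_polynomial_function (p i) \<and> real_polynomial_function (q i)"
    and "\<forall>j\<in>{1..m}. real_polynomial_function (g j)"
    and "compact {x. \<forall>j\<in>{1..m}. g j x \<ge> 0}"
    and "\<forall>i\<in>{1..N}. \<forall>x\<in>{x. \<forall>j\<in>{1..m}. g j x \<ge> 0}. q i x > 0"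
  shows "(SUP c \<in> {c. \<exists>h :: nat \<Rightarrow> (real^'n \<Rightarrow> real).
              (\<forall>i\<in>{2..N}. real_polynomial_function (h i)) \<and>
              (\<forall>x\<in>{x. \<forall>j\<in>{1..m}. g j x \<ge> 0}.
                  p 1 x + ((\<Sum>i=2..N. h i x) - c) * q 1 x \<ge> 0) \<and>
              (\<forall>i\<in>{2..N}. \<forall>x\<in>{x. \<forall>j\<in>{1..m}. g j x \<ge> 0}.
                  p i x - h i x * q i x \<ge> 0)}. ereal c)
         = (INF x \<in> {x. \<forall>j\<in>{1..m}. g j x \<ge> 0}. ereal (\<Sum>i=1..N. p i x / q i x))"
  (is "(SUP c \<in> ?C. ereal c) = (INF x \<in> ?K. ereal (?f x))")
proof -
  have split: "?f x = p 1 x / q 1 x + (\<Sum>i=2..N. p i x / q i x)" for x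
    using assms(1) by (simp add: sum.atLeast_Suc_atMost numeral_2_eq_2)
  have weak: "c \<le> ?f x" if "c \<in> ?C" "x \<in> ?K" for c x
  proof -
    from that(1) obtain h where h1: "\<forall>x\<in>?K. p 1 x + ((\<Sum>i=2..N. h i x) - c) * q 1 x \<ge> 0"
      and h2: "\<forall>i\<in>{2..N}. \<forall>x\<in>?K. p i x - h i x * q i x \<ge> 0" by blast
    have q1: "q 1 x > 0" using assms(6) assms(1) that(2) by auto
    have a: "h i x \<le> p i x / q i x" if "i \<in> {2..N}" for i
    proof -
      have "q i x > 0" using assms(6) that \<open>x \<in> ?K\<close> by auto
      with h2 that \<open>x \<in> ?K\<close> show ?thesis by (simp add: pos_le_divide_eq)
    qed
    have b: "c \<le> p 1 x / q 1 x + (\<Sum>i=2..N. h i x)"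
    proof -
      have "0 \<le> (p 1 x / q 1 x + (\<Sum>i=2..N. h i x) - c) * q 1 x"
        using h1 that(2) q1 by (simp add: algebra_simps)
      then show ?thesis using q1 by (simp add: zero_le_mult_iff)
    qed
    have "(\<Sum>i=2..N. h i x) \<le> (\<Sum>i=2..N. p i x / q i x)"
      by (rule sum_mono) (use a in auto)
    with b split[of x] show ?thesis by linarith
  qed
  have strong: "r - e \<in> ?C" if r: "\<forall>x\<in>?K. r \<le> ?f x" and e: "e > 0" for r e
  proof -
    define d where "d = e / (2 * real N)"
    have d: "d > 0" using e assms(1) by (simp add: d_def)
    have "\<forall>i\<in>{2..N}. \<exists>G. real_polynomial_function G \<and> (\<forall>x\<in>?K. \<bar>p i x / q i x - G x\<bar> < d)"
    proof
      fix i assume i: "i \<in> {2..N}"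
      have "continuous_on ?K (\<lambda>x. p i x / q i x)"
      proof (rule continuous_on_divide)
        show "continuous_on ?K (p i)" using assms(3) i
          by (intro continuous_at_imp_continuous_on ballI continuous_real_polymonial_function) auto
        show "continuous_on ?K (q i)" using assms(3) i
          by (intro continuous_at_imp_continuous_on ballI continuous_real_polymonial_function) auto
        show "\<forall>x\<in>?K. q i x \<noteq> 0"
        proof
          fix x assume "x \<in> ?K"
          moreover have "i \<in> {1..N}" using i by simp
          ultimately have "q i x > 0" using assms(6) by blast
          then show "q i x \<noteq> 0" by simp
        qed
      qed
      then obtain G where "real_polynomial_function G" "\<And>x. x \<in> ?K \<Longrightarrow> \<bar>p i x / q i x - G x\<bar> < d"
        using Stone_Weierstrass_real_polynomial_function[OF assms(5) _ d] by blast
      then show "\<exists>G. real_polynomial_function G \<and> (\<forall>x\<in>?K. \<bar>p i x / q i x - G x\<bar> < d)" by blast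
    qed
    then have "\<exists>G. \<forall>i\<in>{2..N}. real_polynomial_function (G i) \<and> (\<forall>x\<in>?K. \<bar>p i x / q i x - G i x\<bar> < d)"
      by (rule bchoice)
    then obtain G where G: "\<forall>i\<in>{2..N}. real_polynomial_function (G i) \<and> (\<forall>x\<in>?K. \<bar>p i x / q i x - G i x\<bar> < d)"
      by blast
    define h where "h i x = G i x - d" for i x
    have hp: "\<forall>i\<in>{2..N}. real_polynomial_function (h i)"
      using G unfolding h_def[abs_def] by auto
    have hb: "h i x \<le> p i x / q i x" "p i x / q i x - 2 * d \<le> h i x" if "i \<in> {2..N}" "x \<in> ?K" for i x
    proof -
      have "\<bar>p i x / q i x - G i x\<bar> < d" using G that by blast
      then show "h i x \<le> p i x / q i x" "p i x / q i x - 2 * d \<le> h i x"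
        unfolding h_def by (auto simp: abs_less_iff)
    qed
    have c2: "\<forall>i\<in>{2..N}. \<forall>x\<in>?K. p i x - h i x * q i x \<ge> 0"
    proof (intro ballI)
      fix i x assume "i \<in> {2..N}" "x \<in> ?K"
      moreover have "q i x > 0" using assms(6) calculation by auto
      ultimately have "h i x \<le> p i x / q i x" "q i x > 0" using hb(1) by auto
      then show "p i x - h i x * q i x \<ge> 0" by (simp add: pos_le_divide_eq)
    qed
    have c1: "\<forall>x\<in>?K. p 1 x + ((\<Sum>i=2..N. h i x) - (r - e)) * q 1 x \<ge> 0"
    proof
      fix x assume x: "x \<in> ?K"
      have q1: "q 1 x > 0" using assms(6) assms(1) x by auto
      have "(\<Sum>i=2..N. p i x / q i x - 2 * d) \<le> (\<Sum>i=2..N. h i x)"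
        by (rule sum_mono) (use hb x in auto)
      moreover have "(\<Sum>i=2..N. p i x / q i x - 2 * d) = (\<Sum>i=2..N. p i x / q i x) - real (N - 1) * (2 * d)"
        by (simp add: sum_subtractf)
      moreover have "real (N - 1) * (2 * d) \<le> e"
      proof -
        have "real (N - 1) * (2 * d) \<le> real N * (2 * d)" using d by (intro mult_right_mono) auto
        also have "\<dots> = e" using assms(1) by (simp add: d_def)
        finally show ?thesis .
      qed
      moreover have "r \<le> ?f x" using r x by blast
      ultimately have "0 \<le> p 1 x / q 1 x + (\<Sum>i=2..N. h i x) - (r - e)"
        using split[of x] by linarith
      then have "0 \<le> (p 1 x / q 1 x + (\<Sum>i=2..N. h i x) - (r - e)) * q 1 x"
        using q1 by simp
      then show "p 1 x + ((\<Sum>i=2..N. h i x) - (r - e)) * q 1 x \<ge> 0"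
        using q1 by (simp add: algebra_simps)
    qed
    show ?thesis using hp c1 c2 by blast
  qed
  show ?thesis
  proof (rule antisym)
    show "(SUP c \<in> ?C. ereal c) \<le> (INF x \<in> ?K. ereal (?f x))"
      by (intro SUP_least INF_greatest) (use weak in auto)
  next
    have key: "ereal r \<le> (SUP c \<in> ?C. ereal c)" if "ereal r \<le> (INF x \<in> ?K. ereal (?f x))" for r
    proof (rule ereal_le_epsilon2)
      fix e :: real assume e: "0 < e"
      have "\<forall>x\<in>?K. r \<le> ?f x" using that by (auto simp: le_INF_iff)
      then have "r - e \<in> ?C" using strong e by blast
      then have "ereal (r - e) \<le> (SUP c \<in> ?C. ereal c)" by (rule SUP_upper)
      then show "ereal r \<le> (SUP c \<in> ?C. ereal c) + ereal e"
      proof -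
        have "ereal r = ereal (r - e) + ereal e" by simp
        also have "\<dots> \<le> (SUP c \<in> ?C. ereal c) + ereal e"
          using \<open>ereal (r - e) \<le> (SUP c \<in> ?C. ereal c)\<close> by (rule add_right_mono)
        finally show ?thesis .
      qed
    qed
    show "(INF x \<in> ?K. ereal (?f x)) \<le> (SUP c \<in> ?C. ereal c)"
    proof (rule dense_le)
      fix y assume y: "y < (INF x \<in> ?K. ereal (?f x))"
      show "y \<le> (SUP c \<in> ?C. ereal c)"
      proof (cases y)
        case (real r) then show ?thesis using key y by simp
      qed (use y in auto)
    qed
  qed
qed

end
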